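(* Let $(Y,X,A)$ be jointly distributed with $Y,A\in\{0,1\}$, let $R=\mathbb{E}[Y\mid X,A]$ be the Bayes optimal regressor, and let $\ell:\{0,1\}^2\to\mathbb{R}$ be a loss function. Then there exists a predictor derived from $(R,A)$ that satisfies equalized odds and has expected loss $\mathbb{E}\,\ell(\cdot,Y)$ no larger than that of any (possibly randomized) predictor $\widehat{Y}(X,A)\in\{0,1\}$ satisfying equalized odds. The same holds with equalized odds replaced by equal opportunity.
   Context: A predictor $\widehat{Y}\in\{0,1\}$ satisfies equalized odds if $\widehat{Y}$ and $A$ are independent conditional on $Y$, i.e. $\Pr\{\widehat{Y}=1\mid A=0,Y=y\}=\Pr\{\widehat{Y}=1\mid A=1,Y=y\}$ for $y\in\{0,1\}$. It satisfies equal opportunity if $\Pr\{\widehat{Y}=1\mid A=0,Y=1\}=\Pr\{\widehat{Y}=1\mid A=1,Y=1\}$. A predictor is derived from $(R,A)$ if it is a possibly randomized function of $(R,A)$ alone (randomness independent of everything else). *)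

theory Defs
  imports "HOL-Probability.Probability"
begin

text \<open>A (possibly randomized) binary predictor is represented by the function
  pi :: 'a => real giving, at each outcome omega of the underlying probability space,
  the probability that the predictor outputs 1 (True); its internal randomness is
  independent of everything else.  Hence the joint probability that the predictor
  outputs 1 and the event E occurs is the integral of pi over E.\<close>

definition pred_joint :: "'a measure \<Rightarrow> ('a \<Rightarrow> real) \<Rightarrow> ('a \<Rightarrow> bool) \<Rightarrow> real" where
  "pred_joint M \<pi> E = (\<integral>\<omega>. \<pi> \<omega> * indicator {\<omega>\<in>space M. E \<omega>} \<omega> \<partial>M)"

text \<open>Equalized odds: Pr(Yhat=1 | A=0,Y=y) = Pr(Yhat=1 | A=1,Y=y) for y in {0,1},
  written in cross-multiplied form (avoids division by zero-probability events).\<close>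

definition equalized_odds ::
  "'a measure \<Rightarrow> ('a \<Rightarrow> real) \<Rightarrow> ('a \<Rightarrow> bool) \<Rightarrow> ('a \<Rightarrow> bool) \<Rightarrow> bool" where
  "equalized_odds M \<pi> A Y =
    (\<forall>y. pred_joint M \<pi> (\<lambda>\<omega>. A \<omega> = False \<and> Y \<omega> = y) * measure M {\<omega>\<in>space M. A \<omega> = True \<and> Y \<omega> = y}
       = pred_joint M \<pi> (\<lambda>\<omega>. A \<omega> = True \<and> Y \<omega> = y) * measure M {\<omega>\<in>space M. A \<omega> = False \<and> Y \<omega> = y})"

definition equal_opportunity ::
  "'a measure \<Rightarrow> ('a \<Rightarrow> real) \<Rightarrow> ('a \<Rightarrow> bool) \<Rightarrow> ('a \<Rightarrow> bool) \<Rightarrow> bool" where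
  "equal_opportunity M \<pi> A Y =
    (pred_joint M \<pi> (\<lambda>\<omega>. A \<omega> = False \<and> Y \<omega> = True) * measure M {\<omega>\<in>space M. A \<omega> = True \<and> Y \<omega> = True}
       = pred_joint M \<pi> (\<lambda>\<omega>. A \<omega> = True \<and> Y \<omega> = True) * measure M {\<omega>\<in>space M. A \<omega> = False \<and> Y \<omega> = True})"

definition expected_loss ::
  "'a measure \<Rightarrow> ('a \<Rightarrow> real) \<Rightarrow> (bool \<Rightarrow> bool \<Rightarrow> real) \<Rightarrow> ('a \<Rightarrow> bool) \<Rightarrow> real" where
  "expected_loss M \<pi> l Y =
    (\<integral>\<omega>. \<pi> \<omega> * l True (Y \<omega>) + (1 - \<pi> \<omega>) * l False (Y \<omega>) \<partial>M)"

text \<open>Randomized predictor Yhat(X,A): measurable p(x,a) in [0,1] = Pr(Yhat = 1 | X=x, A=a).\<close>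

definition randomized_predictor :: "'x measure \<Rightarrow> ('x \<Rightarrow> bool \<Rightarrow> real) \<Rightarrow> bool" where
  "randomized_predictor MX p =
    ((\<lambda>(x, a). p x a) \<in> borel_measurable (MX \<Otimes>\<^sub>M count_space UNIV) \<and> (\<forall>x a. 0 \<le> p x a \<and> p x a \<le> 1))"

end

theory Submission
  imports Defs
begin


lemma (in prob_space) threshold_exists:
  fixes \<rho> :: "'a \<Rightarrow> real"
  assumes rho[measurable]: "\<rho> \<in> borel_measurable M" and S[measurable]: "S \<in> sets M"
    and t: "0 < t" "t < measure M S"
  shows "\<exists>\<tau> \<theta>. 0 \<le> \<theta> \<and> \<theta> \<le> 1 \<and>
     measure M {\<omega>\<in>space M. \<omega> \<in> S \<and> \<tau> < \<rho> \<omega>} + \<theta> * measure M {\<omega>\<in>space M. \<omega> \<in> S \<and> \<rho> \<omega> = \<tau>} = t"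
proof -
  define G where "G \<tau> = measure M {\<omega>\<in>space M. \<omega> \<in> S \<and> \<tau> < \<rho> \<omega>}" for \<tau>
  have Gmono: "G \<tau>' \<le> G \<tau>" if "\<tau> \<le> \<tau>'" for \<tau> \<tau>'
    unfolding G_def
  proof (rule finite_measure_mono)
    show "{\<omega> \<in> space M. \<omega> \<in> S \<and> \<tau>' < \<rho> \<omega>} \<subseteq> {\<omega> \<in> space M. \<omega> \<in> S \<and> \<tau> < \<rho> \<omega>}"
      using that by auto
  qed measurable
  have lim1: "(\<lambda>n. G (real n)) \<longlonglongrightarrow> measure M (\<Inter>n. {\<omega>\<in>space M. \<omega> \<in> S \<and> real n < \<rho> \<omega>})"
    unfolding G_def by (intro finite_Lim_measure_decseq) (auto simp: decseq_def)
  have "(\<Inter>n. {\<omega>\<in>space M. \<omega> \<in> S \<and> real n < \<rho> \<omega>}) = {}"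
    using reals_Archimedean2 by (auto, meson less_le_not_le)
  with lim1 have "(\<lambda>n. G (real n)) \<longlonglongrightarrow> 0" by simp
  with t have "eventually (\<lambda>n. G (real n) < t) sequentially"
    by (intro order_tendstoD) auto
  then obtain n1 where n1: "G (real n1) < t" by (auto dest: eventually_happens)
  have lim2: "(\<lambda>n. G (- real n)) \<longlonglongrightarrow> measure M (\<Union>n. {\<omega>\<in>space M. \<omega> \<in> S \<and> - real n < \<rho> \<omega>})"
    unfolding G_def by (intro finite_Lim_measure_incseq) (auto simp: incseq_def)
  have "(\<Union>n. {\<omega>\<in>space M. \<omega> \<in> S \<and> - real n < \<rho> \<omega>}) = S"
  proof -
    have "\<exists>n. - real n < \<rho> \<omega>" for \<omega>
      by (metis minus_less_iff reals_Archimedean2)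
    then show ?thesis using sets.sets_into_space[OF S] by auto
  qed
  with lim2 have "(\<lambda>n. G (- real n)) \<longlonglongrightarrow> measure M S" by simp
  with t have "eventually (\<lambda>n. t < G (- real n)) sequentially"
    by (intro order_tendstoD) auto
  then obtain n2 where n2: "t < G (- real n2)" by (auto dest: eventually_happens)
  define T where "T = {\<tau>. G \<tau> \<le> t}"
  have Tne: "real n1 \<in> T" using n1 by (simp add: T_def)
  have Tlow: "\<tau> \<in> T \<Longrightarrow> - real n2 \<le> \<tau>" for \<tau>
    using Gmono[of \<tau> "- real n2"] n2 by (force simp: T_def)
  have bdd: "bdd_below T" using Tlow by (auto simp: bdd_below_def)
  define \<tau> where "\<tau> = Inf T"
  have "G \<tau> \<le> t"
  proof -
    have lim: "(\<lambda>n. G (\<tau> + 1 / Suc n)) \<longlonglongrightarrow> measure M (\<Union>n. {\<omega>\<in>space M. \<omega> \<in> S \<and> \<tau> + 1 / Suc n < \<rho> \<omega>})"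
      unfolding G_def
    proof (intro finite_Lim_measure_incseq)
      show "incseq (\<lambda>n. {\<omega> \<in> space M. \<omega> \<in> S \<and> \<tau> + 1 / real (Suc n) < \<rho> \<omega>})"
        unfolding incseq_def
      proof (intro allI impI subsetI)
        fix m n x assume "m \<le> n" "x \<in> {\<omega> \<in> space M. \<omega> \<in> S \<and> \<tau> + 1 / real (Suc m) < \<rho> \<omega>}"
        moreover have "1 / real (Suc n) \<le> 1 / real (Suc m)" using \<open>m \<le> n\<close> by (simp add: frac_le)
        ultimately show "x \<in> {\<omega> \<in> space M. \<omega> \<in> S \<and> \<tau> + 1 / real (Suc n) < \<rho> \<omega>}" by auto
      qed
    qed auto
    have "(\<Union>n. {\<omega>\<in>space M. \<omega> \<in> S \<and> \<tau> + 1 / Suc n < \<rho> \<omega>}) = {\<omega>\<in>space M. \<omega> \<in> S \<and> \<tau> < \<rho> \<omega>}"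
    proof (auto)
      fix \<omega> assume "\<tau> < \<rho> \<omega>"
      then obtain n where "1 / real (Suc n) < \<rho> \<omega> - \<tau>"
        using reals_Archimedean[of "\<rho> \<omega> - \<tau>"] by (auto simp: inverse_eq_divide)
      then have "\<tau> + 1 / (1 + real n) < \<rho> \<omega>" by simp
      then show "\<exists>n. \<tau> + 1 / (1 + real n) < \<rho> \<omega>" by blast
    next
      fix \<omega> n assume "\<tau> + 1 / (1 + real n) < \<rho> \<omega>"
      moreover have "0 < 1 / (1 + real n)" by simp
      ultimately show "\<tau> < \<rho> \<omega>" by linarith
    qed
    with lim have lim': "(\<lambda>n. G (\<tau> + 1 / Suc n)) \<longlonglongrightarrow> G \<tau>" by (simp add: G_def)
    have "G (\<tau> + 1 / Suc n) \<le> t" for n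
    proof -
      have "\<tau> < \<tau> + 1 / Suc n" by simp
      then obtain s where "s \<in> T" "s < \<tau> + 1 / Suc n"
        using cInf_lessD[of T] Tne unfolding \<tau>_def by blast
      then show ?thesis using Gmono[of s "\<tau> + 1 / Suc n"] by (auto simp: T_def)
    qed
    with lim' show ?thesis by (intro LIMSEQ_le_const2) auto
  qed
  define H where "H = measure M {\<omega>\<in>space M. \<omega> \<in> S \<and> \<tau> \<le> \<rho> \<omega>}"
  have "t \<le> H"
  proof -
    have lim: "(\<lambda>n. G (\<tau> - 1 / Suc n)) \<longlonglongrightarrow> measure M (\<Inter>n. {\<omega>\<in>space M. \<omega> \<in> S \<and> \<tau> - 1 / Suc n < \<rho> \<omega>})"
      unfolding G_def
    proof (intro finite_Lim_measure_decseq)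
      show "decseq (\<lambda>n. {\<omega> \<in> space M. \<omega> \<in> S \<and> \<tau> - 1 / real (Suc n) < \<rho> \<omega>})"
        unfolding decseq_def
      proof (intro allI impI subsetI)
        fix m n x assume "m \<le> n" "x \<in> {\<omega> \<in> space M. \<omega> \<in> S \<and> \<tau> - 1 / real (Suc n) < \<rho> \<omega>}"
        moreover have "1 / real (Suc n) \<le> 1 / real (Suc m)" using \<open>m \<le> n\<close> by (simp add: frac_le)
        ultimately show "x \<in> {\<omega> \<in> space M. \<omega> \<in> S \<and> \<tau> - 1 / real (Suc m) < \<rho> \<omega>}" by auto
      qed
    qed auto
    have "(\<Inter>n. {\<omega>\<in>space M. \<omega> \<in> S \<and> \<tau> - 1 / Suc n < \<rho> \<omega>}) = {\<omega>\<in>space M. \<omega> \<in> S \<and> \<tau> \<le> \<rho> \<omega>}"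
    proof (auto)
      fix \<omega> assume "\<forall>n. \<tau> - 1 / (1 + real n) < \<rho> \<omega>"
      show "\<tau> \<le> \<rho> \<omega>"
      proof (rule ccontr)
        assume "\<not> \<tau> \<le> \<rho> \<omega>"
        then obtain n where "1 / real (Suc n) < \<tau> - \<rho> \<omega>"
          using reals_Archimedean[of "\<tau> - \<rho> \<omega>"] by (auto simp: inverse_eq_divide)
        with \<open>\<forall>n. \<tau> - 1 / (1 + real n) < \<rho> \<omega>\<close>[rule_format, of n] show False by (auto simp: add.commute)
      qed
    next
      fix \<omega> n assume "\<tau> \<le> \<rho> \<omega>"
      moreover have "0 < 1 / (1 + real n)" by simp
      ultimately show "\<tau> - 1 / (1 + real n) < \<rho> \<omega>" by linarith
    qed
    with lim have lim': "(\<lambda>n. G (\<tau> - 1 / Suc n)) \<longlonglongrightarrow> H" by (simp add: H_def)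
    have "t \<le> G (\<tau> - 1 / Suc n)" for n
    proof (rule ccontr)
      assume "\<not> t \<le> G (\<tau> - 1 / Suc n)"
      then have "\<tau> - 1 / Suc n \<in> T" by (simp add: T_def)
      then have "\<tau> \<le> \<tau> - 1 / Suc n" unfolding \<tau>_def using bdd by (rule cInf_lower)
      then show False by simp
    qed
    with lim' show ?thesis by (intro LIMSEQ_le_const) auto
  qed
  define P where "P = measure M {\<omega>\<in>space M. \<omega> \<in> S \<and> \<rho> \<omega> = \<tau>}"
  have HGP: "H = G \<tau> + P"
  proof -
    have "{\<omega>\<in>space M. \<omega> \<in> S \<and> \<tau> \<le> \<rho> \<omega>} = {\<omega>\<in>space M. \<omega> \<in> S \<and> \<tau> < \<rho> \<omega>} \<union> {\<omega>\<in>space M. \<omega> \<in> S \<and> \<rho> \<omega> = \<tau>}"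
      by auto
    then show ?thesis unfolding H_def G_def P_def
      by (simp only:) (rule finite_measure_Union, auto)
  qed
  show ?thesis
  proof (cases "P = 0")
    case True
    then show ?thesis using \<open>G \<tau> \<le> t\<close> \<open>t \<le> H\<close> HGP
      by (intro exI[of _ \<tau>] exI[of _ 0]) (simp add: G_def)
  next
    case False
    have "P \<ge> 0" by (simp add: P_def)
    with False have Pp: "P > 0" by simp
    show ?thesis using \<open>G \<tau> \<le> t\<close> \<open>t \<le> H\<close> HGP Pp
      by (intro exI[of _ \<tau>] exI[of _ "(t - G \<tau>) / P"])
        (auto simp: G_def[symmetric] P_def[symmetric] divide_simps)
  qed
qed




lemma (in finite_measure) intb:
  fixes \<rho> g :: "'a \<Rightarrow> real"
  assumes "integrable M \<rho>" "g \<in> borel_measurable M" "\<And>\<omega>. \<bar>g \<omega>\<bar> \<le> 1"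
  shows "integrable M (\<lambda>\<omega>. g \<omega> * \<rho> \<omega>)"
proof (rule Bochner_Integration.integrable_bound[OF assms(1)])
  show "(\<lambda>\<omega>. g \<omega> * \<rho> \<omega>) \<in> borel_measurable M"
    using assms by (auto intro: borel_measurable_integrable)
  show "AE x in M. norm (g x * \<rho> x) \<le> norm (\<rho> x)"
    using assms(3) by (auto simp: abs_mult intro!: mult_left_le_one_le)
qed

lemma (in finite_measure) intb1:
  fixes g :: "'a \<Rightarrow> real"
  assumes "g \<in> borel_measurable M" "\<And>\<omega>. \<bar>g \<omega>\<bar> \<le> 1"
  shows "integrable M g"
  using intb[of "\<lambda>_. 1" g] assms by simp

lemma (in finite_measure) int_ind:
  "A \<in> sets M \<Longrightarrow> integrable M (indicat_real A)"
  by (rule intb1) (auto simp: indicator_def)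

lemma (in prob_space) np_max:
  fixes \<rho> :: "'a \<Rightarrow> real"
  assumes rho[measurable]: "\<rho> \<in> borel_measurable M" and irho: "integrable M \<rho>"
    and S[measurable]: "S \<in> sets M" and t: "0 \<le> t" "t \<le> measure M S"
  shows "\<exists>h. h \<in> borel_measurable borel \<and> (\<forall>r. 0 \<le> h r \<and> h r \<le> 1) \<and>
     (\<integral>\<omega>. h (\<rho> \<omega>) * indicator S \<omega> \<partial>M) = t \<and>
     (\<forall>\<pi>. \<pi> \<in> borel_measurable M \<and> (\<forall>\<omega>. 0 \<le> \<pi> \<omega> \<and> \<pi> \<omega> \<le> 1) \<and> (\<integral>\<omega>. \<pi> \<omega> * indicator S \<omega> \<partial>M) = t \<longrightarrow>
        (\<integral>\<omega>. \<pi> \<omega> * indicator S \<omega> * \<rho> \<omega> \<partial>M) \<le> (\<integral>\<omega>. h (\<rho> \<omega>) * indicator S \<omega> * \<rho> \<omega> \<partial>M))"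
proof -
  have ind1: "\<bar>\<pi> \<omega> * indicator S \<omega>\<bar> \<le> 1" if "\<forall>\<omega>. 0 \<le> \<pi> \<omega> \<and> \<pi> \<omega> \<le> 1" for \<pi> :: "'a \<Rightarrow> real" and \<omega>
    using that by (auto simp: indicator_def)
  consider "t = 0" | "t = measure M S" | "0 < t \<and> t < measure M S" using t by linarith
  then show ?thesis
  proof cases
    case 1
    show ?thesis
    proof (intro exI[of _ "\<lambda>_. 0"] conjI allI impI)
      fix \<pi> :: "'a \<Rightarrow> real"
      assume \<pi>: "\<pi> \<in> borel_measurable M \<and> (\<forall>\<omega>. 0 \<le> \<pi> \<omega> \<and> \<pi> \<omega> \<le> 1) \<and> (\<integral>\<omega>. \<pi> \<omega> * indicator S \<omega> \<partial>M) = t"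
      have "integrable M (\<lambda>\<omega>. \<pi> \<omega> * indicator S \<omega>)"
        using \<pi> ind1[of \<pi>] by (intro intb1) auto
      then have "AE \<omega> in M. \<pi> \<omega> * indicator S \<omega> = 0"
        using \<pi> 1 integral_nonneg_eq_0_iff_AE[of M "\<lambda>\<omega>. \<pi> \<omega> * indicator S \<omega>"] by auto
      then have "(\<integral>\<omega>. \<pi> \<omega> * indicator S \<omega> * \<rho> \<omega> \<partial>M) = (\<integral>\<omega>. 0 \<partial>M)"
        by (intro integral_cong_AE) (use \<pi> in auto)
      then show "(\<integral>\<omega>. \<pi> \<omega> * indicator S \<omega> * \<rho> \<omega> \<partial>M) \<le> (\<integral>\<omega>. 0 * indicator S \<omega> * \<rho> \<omega> \<partial>M)"
        by simp
    qed (use 1 in auto)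
  next
    case 2
    show ?thesis
    proof (intro exI[of _ "\<lambda>_. 1"] conjI allI impI)
      fix \<pi> :: "'a \<Rightarrow> real"
      assume \<pi>: "\<pi> \<in> borel_measurable M \<and> (\<forall>\<omega>. 0 \<le> \<pi> \<omega> \<and> \<pi> \<omega> \<le> 1) \<and> (\<integral>\<omega>. \<pi> \<omega> * indicator S \<omega> \<partial>M) = t"
      have i1: "integrable M (\<lambda>\<omega>. \<pi> \<omega> * indicator S \<omega>)"
        using \<pi> ind1[of \<pi>] by (intro intb1) auto
      have i2: "integrable M (\<lambda>\<omega>. indicator S \<omega> :: real)"
        by (intro intb1) (auto simp: indicator_def)
      have "(\<integral>\<omega>. (1 - \<pi> \<omega>) * indicator S \<omega> \<partial>M) = (\<integral>\<omega>. indicator S \<omega> - \<pi> \<omega> * indicator S \<omega> \<partial>M)"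
        by (simp add: algebra_simps)
      also have "\<dots> = (\<integral>\<omega>. indicator S \<omega> \<partial>M) - (\<integral>\<omega>. \<pi> \<omega> * indicator S \<omega> \<partial>M)"
        by (rule Bochner_Integration.integral_diff[OF i2 i1])
      also have "\<dots> = measure M S - t"
        using \<pi> by simp
      finally have z: "(\<integral>\<omega>. (1 - \<pi> \<omega>) * indicator S \<omega> \<partial>M) = 0" using 2 by simp
      have "integrable M (\<lambda>\<omega>. (1 - \<pi> \<omega>) * indicator S \<omega>)"
        using \<pi> by (intro intb1) (auto simp: indicator_def)
      then have "AE \<omega> in M. (1 - \<pi> \<omega>) * indicator S \<omega> = 0"
        using \<pi> z integral_nonneg_eq_0_iff_AE[of M "\<lambda>\<omega>. (1 - \<pi> \<omega>) * indicator S \<omega>"] by auto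
      then have "(\<integral>\<omega>. \<pi> \<omega> * indicator S \<omega> * \<rho> \<omega> \<partial>M) = (\<integral>\<omega>. 1 * indicator S \<omega> * \<rho> \<omega> \<partial>M)"
        by (intro integral_cong_AE) (use \<pi> in \<open>auto simp: indicator_def split: if_splits\<close>)
      then show "(\<integral>\<omega>. \<pi> \<omega> * indicator S \<omega> * \<rho> \<omega> \<partial>M) \<le> (\<integral>\<omega>. 1 * indicator S \<omega> * \<rho> \<omega> \<partial>M)"
        by simp
    qed (use 2 in auto)
  next
    case 3
    then obtain \<tau> \<theta> where th: "0 \<le> \<theta>" "\<theta> \<le> 1"
      "measure M {\<omega>\<in>space M. \<omega> \<in> S \<and> \<tau> < \<rho> \<omega>} + \<theta> * measure M {\<omega>\<in>space M. \<omega> \<in> S \<and> \<rho> \<omega> = \<tau>} = t"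
      using threshold_exists[OF rho S] by blast
    define h where "h r = (if \<tau> < r then 1 else if r = \<tau> then \<theta> else 0)" for r :: real
    have hm[measurable]: "h \<in> borel_measurable borel" unfolding h_def by measurable
    have h01: "0 \<le> h r \<and> h r \<le> 1" for r using th by (auto simp: h_def)
    have hb: "\<bar>h (\<rho> \<omega>) * indicator S \<omega>\<bar> \<le> 1" for \<omega>
      using h01[of "\<rho> \<omega>"] by (auto simp: indicator_def)
    have hS: "(\<integral>\<omega>. h (\<rho> \<omega>) * indicator S \<omega> \<partial>M) = t"
    proof -
      have "(\<integral>\<omega>. h (\<rho> \<omega>) * indicator S \<omega> \<partial>M) =
        (\<integral>\<omega>. indicator {\<omega>\<in>space M. \<omega> \<in> S \<and> \<tau> < \<rho> \<omega>} \<omega> + \<theta> * indicator {\<omega>\<in>space M. \<omega> \<in> S \<and> \<rho> \<omega> = \<tau>} \<omega> \<partial>M)"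
        by (intro Bochner_Integration.integral_cong) (auto simp: h_def indicator_def)
      also have "\<dots> = t"
      proof -
        have "{\<omega>\<in>space M. \<omega> \<in> S \<and> \<tau> < \<rho> \<omega>} \<in> sets M" "{\<omega>\<in>space M. \<omega> \<in> S \<and> \<rho> \<omega> = \<tau>} \<in> sets M"
          by measurable
        then show ?thesis
          using th(3) by (subst Bochner_Integration.integral_add) (auto intro: int_ind)
      qed
      finally show ?thesis .
    qed
    show ?thesis
    proof (intro exI[of _ h] conjI allI impI hm h01 hS)
      fix \<pi> :: "'a \<Rightarrow> real"
      assume \<pi>: "\<pi> \<in> borel_measurable M \<and> (\<forall>\<omega>. 0 \<le> \<pi> \<omega> \<and> \<pi> \<omega> \<le> 1) \<and> (\<integral>\<omega>. \<pi> \<omega> * indicator S \<omega> \<partial>M) = t"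
      have pm[measurable]: "\<pi> \<in> borel_measurable M" using \<pi> by auto
      have i1: "integrable M (\<lambda>\<omega>. \<pi> \<omega> * indicator S \<omega>)"
        using \<pi> ind1[of \<pi>] by (intro intb1) auto
      have i2: "integrable M (\<lambda>\<omega>. h (\<rho> \<omega>) * indicator S \<omega>)"
        by (intro intb1 hb) measurable
      have i3: "integrable M (\<lambda>\<omega>. \<pi> \<omega> * indicator S \<omega> * \<rho> \<omega>)"
        using \<pi> ind1[of \<pi>] by (intro intb irho) auto
      have i4: "integrable M (\<lambda>\<omega>. h (\<rho> \<omega>) * indicator S \<omega> * \<rho> \<omega>)"
        by (intro intb irho hb) measurable
      have "0 \<le> (\<integral>\<omega>. (h (\<rho> \<omega>) - \<pi> \<omega>) * (\<rho> \<omega> - \<tau>) * indicator S \<omega> \<partial>M)"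
      proof (intro integral_nonneg_AE AE_I2)
        fix \<omega> show "0 \<le> (h (\<rho> \<omega>) - \<pi> \<omega>) * (\<rho> \<omega> - \<tau>) * indicator S \<omega>"
          using \<pi> by (auto simp: h_def indicator_def mult_nonneg_nonneg mult_nonpos_nonpos mult_nonneg_nonpos)
      qed
      also have "\<dots> = (\<integral>\<omega>. (h (\<rho> \<omega>) * indicator S \<omega> * \<rho> \<omega> - \<pi> \<omega> * indicator S \<omega> * \<rho> \<omega>)
             - \<tau> * (h (\<rho> \<omega>) * indicator S \<omega> - \<pi> \<omega> * indicator S \<omega>) \<partial>M)"
        by (intro Bochner_Integration.integral_cong) (auto simp: algebra_simps)
      also have "\<dots> = (\<integral>\<omega>. h (\<rho> \<omega>) * indicator S \<omega> * \<rho> \<omega> \<partial>M) - (\<integral>\<omega>. \<pi> \<omega> * indicator S \<omega> * \<rho> \<omega> \<partial>M)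
           - \<tau> * ((\<integral>\<omega>. h (\<rho> \<omega>) * indicator S \<omega> \<partial>M) - (\<integral>\<omega>. \<pi> \<omega> * indicator S \<omega> \<partial>M))"
        using i1 i2 i3 i4 by simp
      also have "\<dots> = (\<integral>\<omega>. h (\<rho> \<omega>) * indicator S \<omega> * \<rho> \<omega> \<partial>M) - (\<integral>\<omega>. \<pi> \<omega> * indicator S \<omega> * \<rho> \<omega> \<partial>M)"
        using hS \<pi> by simp
      finally show "(\<integral>\<omega>. \<pi> \<omega> * indicator S \<omega> * \<rho> \<omega> \<partial>M) \<le> (\<integral>\<omega>. h (\<rho> \<omega>) * indicator S \<omega> * \<rho> \<omega> \<partial>M)"
        by simp
    qed (use h01 in auto)
  qed
qed




locale fairsetup = prob_space M for M :: "'a measure" +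
  fixes MX :: "'x measure" and X :: "'a \<Rightarrow> 'x" and Y A :: "'a \<Rightarrow> bool" and R :: "'a \<Rightarrow> real"
  assumes Xm[measurable]: "X \<in> measurable M MX"
    and Ym[measurable]: "Y \<in> measurable M (count_space UNIV)"
    and Am[measurable]: "A \<in> measurable M (count_space UNIV)"
    and Rdef: "R = real_cond_exp M
               (vimage_algebra (space M) (\<lambda>\<omega>. (X \<omega>, A \<omega>)) (MX \<Otimes>\<^sub>M count_space UNIV))
               (\<lambda>\<omega>. if Y \<omega> then 1 else 0)"
begin

definition "F = vimage_algebra (space M) (\<lambda>\<omega>. (X \<omega>, A \<omega>)) (MX \<Otimes>\<^sub>M count_space UNIV)"

lemma XAm: "(\<lambda>\<omega>. (X \<omega>, A \<omega>)) \<in> measurable M (MX \<Otimes>\<^sub>M count_space UNIV)"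
  by measurable

lemma subalg: "subalgebra M F"
proof -
  have "sets F \<subseteq> sets M"
  proof
    fix B assume "B \<in> sets F"
    then obtain C where "C \<in> sets (MX \<Otimes>\<^sub>M count_space UNIV)" "B = (\<lambda>\<omega>. (X \<omega>, A \<omega>)) -` C \<inter> space M"
      unfolding F_def using sets_vimage_algebra2[of "\<lambda>\<omega>. (X \<omega>, A \<omega>)" "space M" "MX \<Otimes>\<^sub>M count_space UNIV"]
        measurable_space[OF XAm] by auto
    then show "B \<in> sets M" using measurable_sets[OF XAm] by auto
  qed
  then show ?thesis unfolding subalgebra_def F_def by simp
qed

lemma sfs: "sigma_finite_subalgebra M F"
  by (intro finite_measure_subalgebra_is_sigma_finite) (unfold_locales, rule subalg)

lemma XAF: "(\<lambda>\<omega>. (X \<omega>, A \<omega>)) \<in> measurable F (MX \<Otimes>\<^sub>M count_space UNIV)"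
  unfolding F_def by (rule measurable_vimage_algebra1) (use measurable_space[OF XAm] in auto)

lemma AF[measurable]: "A \<in> measurable F (count_space UNIV)"
  using measurable_compose[OF XAF measurable_snd] by simp

lemma XF[measurable]: "X \<in> measurable F MX"
  using measurable_compose[OF XAF measurable_fst] by simp

lemma RF[measurable]: "R \<in> borel_measurable F"
  unfolding Rdef F_def[symmetric] by simp

lemma RM[measurable]: "R \<in> borel_measurable M"
  unfolding Rdef by simp

definition indY :: "'a \<Rightarrow> real" where "indY \<omega> = (if Y \<omega> then 1 else 0)"

lemma indYm[measurable]: "indY \<in> borel_measurable M"
  unfolding indY_def by measurable

lemma Rint: "integrable M R"
proof -
  have "integrable M indY" by (intro intb1) (auto simp: indY_def)
  then show ?thesis unfolding Rdef F_def[symmetric] indY_def[symmetric]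
    using sigma_finite_subalgebra.real_cond_exp_int(1)[OF sfs] by blast
qed

lemma FM: "g \<in> borel_measurable F \<Longrightarrow> g \<in> borel_measurable M"
  using measurable_from_subalg[OF subalg] by blast

lemma tower:
  assumes g: "g \<in> borel_measurable F" "\<And>\<omega>. \<bar>g \<omega>\<bar> \<le> 1"
  shows "(\<integral>\<omega>. g \<omega> * R \<omega> \<partial>M) = (\<integral>\<omega>. g \<omega> * indY \<omega> \<partial>M)"
proof -
  have gM: "g \<in> borel_measurable M" using FM[OF g(1)] .
  have "integrable M (\<lambda>\<omega>. g \<omega> * indY \<omega>)"
    using gM g(2) by (intro intb1) (auto simp: indY_def)
  then show ?thesis unfolding Rdef F_def[symmetric] indY_def[symmetric]
    using sigma_finite_subalgebra.real_cond_exp_intg(2)[OF sfs _ g(1) indYm] by blast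
qed

definition SA :: "bool \<Rightarrow> 'a set" where "SA a = {\<omega>\<in>space M. A \<omega> = a}"

lemma SAF[measurable]: "SA a \<in> sets F"
proof -
  have "SA a = {\<omega>\<in>space F. A \<omega> = a}" using subalg by (simp add: SA_def subalgebra_def)
  also have "\<dots> \<in> sets F" by measurable
  finally show ?thesis .
qed

lemma SAM[measurable]: "SA a \<in> sets M"
  using subalg SAF by (auto simp: subalgebra_def)

definition "Cls = {\<pi>. \<pi> \<in> borel_measurable F \<and> (\<forall>\<omega>. 0 \<le> \<pi> \<omega> \<and> \<pi> \<omega> \<le> 1)}"

lemma Cls_M: "\<pi> \<in> Cls \<Longrightarrow> \<pi> \<in> borel_measurable M"
  using FM by (auto simp: Cls_def)

lemma towerS:
  assumes "\<pi> \<in> Cls"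
  shows "(\<integral>\<omega>. \<pi> \<omega> * indicator (SA a) \<omega> * R \<omega> \<partial>M) = (\<integral>\<omega>. \<pi> \<omega> * indicator (SA a) \<omega> * indY \<omega> \<partial>M)"
proof -
  have [measurable]: "\<pi> \<in> borel_measurable F" using assms by (auto simp: Cls_def)
  show ?thesis
    using tower[of "\<lambda>\<omega>. \<pi> \<omega> * indicator (SA a) \<omega>"] assms by (auto simp: Cls_def indicator_def)
qed

lemma bounds01:
  assumes "\<pi> \<in> Cls"
  shows "0 \<le> (\<integral>\<omega>. \<pi> \<omega> * indicator (SA a) \<omega> * R \<omega> \<partial>M)"
    "(\<integral>\<omega>. \<pi> \<omega> * indicator (SA a) \<omega> * R \<omega> \<partial>M) \<le> (\<integral>\<omega>. \<pi> \<omega> * indicator (SA a) \<omega> \<partial>M)"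
proof -
  have [measurable]: "\<pi> \<in> borel_measurable M" using Cls_M[OF assms] .
  have p: "0 \<le> \<pi> \<omega> \<and> \<pi> \<omega> \<le> 1" for \<omega> using assms by (auto simp: Cls_def)
  show "0 \<le> (\<integral>\<omega>. \<pi> \<omega> * indicator (SA a) \<omega> * R \<omega> \<partial>M)"
    unfolding towerS[OF assms] using p by (intro integral_nonneg_AE AE_I2) (auto simp: indY_def)
  have "(\<integral>\<omega>. \<pi> \<omega> * indicator (SA a) \<omega> * indY \<omega> \<partial>M) \<le> (\<integral>\<omega>. \<pi> \<omega> * indicator (SA a) \<omega> \<partial>M)"
    using p by (intro integral_mono intb1) (auto simp: indY_def indicator_def)
  then show "(\<integral>\<omega>. \<pi> \<omega> * indicator (SA a) \<omega> * R \<omega> \<partial>M) \<le> (\<integral>\<omega>. \<pi> \<omega> * indicator (SA a) \<omega> \<partial>M)"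
    unfolding towerS[OF assms] .
qed

end



context fairsetup begin

lemma clsint:
  assumes "\<pi> \<in> Cls"
  shows "integrable M (\<lambda>\<omega>. \<pi> \<omega> * indicator (SA a) \<omega>)"
    "integrable M (\<lambda>\<omega>. \<pi> \<omega> * indicator (SA a) \<omega> * R \<omega>)"
proof -
  have [measurable]: "\<pi> \<in> borel_measurable M" using Cls_M[OF assms] .
  have b: "\<bar>\<pi> \<omega> * indicator (SA a) \<omega>\<bar> \<le> 1" for \<omega> using assms by (auto simp: Cls_def indicator_def)
  show "integrable M (\<lambda>\<omega>. \<pi> \<omega> * indicator (SA a) \<omega>)" by (intro intb1 b) measurable
  show "integrable M (\<lambda>\<omega>. \<pi> \<omega> * indicator (SA a) \<omega> * R \<omega>)" by (intro intb b Rint) measurable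
qed

definition mA :: "bool \<Rightarrow> real" where "mA a = measure M (SA a)"

definition NP :: "bool \<Rightarrow> real \<Rightarrow> (real \<Rightarrow> real) \<Rightarrow> bool" where
  "NP a t h \<longleftrightarrow> h \<in> borel_measurable borel \<and> (\<forall>r. 0 \<le> h r \<and> h r \<le> 1) \<and>
     (\<integral>\<omega>. h (R \<omega>) * indicator (SA a) \<omega> \<partial>M) = t \<and>
     (\<forall>\<pi>. \<pi> \<in> borel_measurable M \<and> (\<forall>\<omega>. 0 \<le> \<pi> \<omega> \<and> \<pi> \<omega> \<le> 1) \<and> (\<integral>\<omega>. \<pi> \<omega> * indicator (SA a) \<omega> \<partial>M) = t \<longrightarrow>
        (\<integral>\<omega>. \<pi> \<omega> * indicator (SA a) \<omega> * R \<omega> \<partial>M) \<le> (\<integral>\<omega>. h (R \<omega>) * indicator (SA a) \<omega> * R \<omega> \<partial>M))"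

definition hu :: "bool \<Rightarrow> real \<Rightarrow> real \<Rightarrow> real" where "hu a t = (SOME h. NP a t h)"

lemma hu_NP: "0 \<le> t \<Longrightarrow> t \<le> mA a \<Longrightarrow> NP a t (hu a t)"
proof -
  assume "0 \<le> t" "t \<le> mA a"
  then have "\<exists>h. NP a t h" unfolding NP_def mA_def by (intro np_max[OF RM Rint SAM])
  then show ?thesis unfolding hu_def by (rule someI_ex)
qed

lemma huR_Cls: "0 \<le> t \<Longrightarrow> t \<le> mA a \<Longrightarrow> (\<lambda>\<omega>. hu a t (R \<omega>)) \<in> Cls"
  using hu_NP[of t a] unfolding NP_def Cls_def by auto

definition U :: "bool \<Rightarrow> real \<Rightarrow> real" where
  "U a t = (\<integral>\<omega>. hu a t (R \<omega>) * indicator (SA a) \<omega> * R \<omega> \<partial>M)"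

lemma mass_hu: "0 \<le> t \<Longrightarrow> t \<le> mA a \<Longrightarrow> (\<integral>\<omega>. hu a t (R \<omega>) * indicator (SA a) \<omega> \<partial>M) = t"
  using hu_NP[of t a] unfolding NP_def by auto

lemma U_max:
  assumes "\<pi> \<in> Cls" "(\<integral>\<omega>. \<pi> \<omega> * indicator (SA a) \<omega> \<partial>M) = t" "0 \<le> t" "t \<le> mA a"
  shows "(\<integral>\<omega>. \<pi> \<omega> * indicator (SA a) \<omega> * R \<omega> \<partial>M) \<le> U a t"
  using hu_NP[of t a] assms Cls_M[OF assms(1)] unfolding NP_def U_def Cls_def by blast

lemma mA_nonneg: "0 \<le> mA a" by (simp add: mA_def)

lemma int_SA: "(\<integral>\<omega>. indicator (SA a) \<omega> \<partial>M) = mA a"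
  by (simp add: mA_def)

lemma U_bounds: "0 \<le> t \<Longrightarrow> t \<le> mA a \<Longrightarrow> 0 \<le> U a t \<and> U a t \<le> t"
  using bounds01[OF huR_Cls, of t a a] mass_hu[of t a] unfolding U_def by auto

lemma U_mono:
  assumes "0 \<le> t" "t \<le> t'" "t' \<le> mA a"
  shows "U a t \<le> U a t'"
proof (cases "t = mA a")
  case True then show ?thesis using assms by simp
next
  case False
  then have mt: "t < mA a" using assms by simp
  define c where "c = (t' - t) / (mA a - t)"
  have c01: "0 \<le> c" "c \<le> 1" using assms mt by (auto simp: c_def divide_simps)
  define h where "h = hu a t"
  have hC: "(\<lambda>\<omega>. h (R \<omega>)) \<in> Cls" unfolding h_def using huR_Cls assms by simp
  have hb: "0 \<le> h r \<and> h r \<le> 1" for r using hu_NP[of t a] assms unfolding NP_def h_def by auto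
  have hm[measurable]: "h \<in> borel_measurable borel" using hu_NP[of t a] assms unfolding NP_def h_def by auto
  have h1C: "(\<lambda>\<omega>. 1 - h (R \<omega>)) \<in> Cls" using hb by (auto simp: Cls_def)
  define \<pi> where "\<pi> \<omega> = h (R \<omega>) + c * (1 - h (R \<omega>))" for \<omega>
  have \<pi>C: "\<pi> \<in> Cls"
  proof -
    have "0 \<le> \<pi> \<omega> \<and> \<pi> \<omega> \<le> 1" for \<omega>
    proof -
      have "c * (1 - h (R \<omega>)) \<le> 1 * (1 - h (R \<omega>))" using c01 hb[of "R \<omega>"] by (intro mult_right_mono) auto
      then show ?thesis using c01 hb[of "R \<omega>"] by (auto simp: \<pi>_def)
    qed
    moreover have "\<pi> \<in> borel_measurable F" unfolding \<pi>_def by measurable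
    ultimately show ?thesis by (auto simp: Cls_def)
  qed
  note i1 = clsint[OF hC, of a] and i2 = clsint[OF h1C, of a]
  have "(\<integral>\<omega>. \<pi> \<omega> * indicator (SA a) \<omega> \<partial>M) = (\<integral>\<omega>. h (R \<omega>) * indicator (SA a) \<omega> + c * ((1 - h (R \<omega>)) * indicator (SA a) \<omega>) \<partial>M)"
    by (intro Bochner_Integration.integral_cong) (auto simp: \<pi>_def algebra_simps)
  also have "\<dots> = t + c * (\<integral>\<omega>. (1 - h (R \<omega>)) * indicator (SA a) \<omega> \<partial>M)"
    using i1 i2 mass_hu[of t a] assms by (simp add: h_def)
  also have "(\<integral>\<omega>. (1 - h (R \<omega>)) * indicator (SA a) \<omega> \<partial>M) = (\<integral>\<omega>. indicator (SA a) \<omega> - h (R \<omega>) * indicator (SA a) \<omega> \<partial>M)"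
    by (intro Bochner_Integration.integral_cong) (auto simp: algebra_simps)
  also have "\<dots> = mA a - t"
    using i1 mass_hu[of t a] assms int_ind[OF SAM, of a] by (simp add: h_def mA_def)
  finally have mass: "(\<integral>\<omega>. \<pi> \<omega> * indicator (SA a) \<omega> \<partial>M) = t'" using mt by (simp add: c_def)
  have "U a t \<le> U a t + c * (\<integral>\<omega>. (1 - h (R \<omega>)) * indicator (SA a) \<omega> * R \<omega> \<partial>M)"
    using bounds01(1)[OF h1C, of a] c01 by simp
  also have "\<dots> = (\<integral>\<omega>. h (R \<omega>) * indicator (SA a) \<omega> * R \<omega> + c * ((1 - h (R \<omega>)) * indicator (SA a) \<omega> * R \<omega>) \<partial>M)"
    using i1 i2 by (simp add: U_def h_def)
  also have "\<dots> = (\<integral>\<omega>. \<pi> \<omega> * indicator (SA a) \<omega> * R \<omega> \<partial>M)"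
    by (intro Bochner_Integration.integral_cong) (auto simp: \<pi>_def algebra_simps)
  also have "\<dots> \<le> U a t'"
    using U_max[OF \<pi>C mass] assms by simp
  finally show ?thesis .
qed

lemma U_lip:
  assumes "0 \<le> t" "t \<le> t'" "t' \<le> mA a"
  shows "U a t' - U a t \<le> t' - t"
proof (cases "t' = 0")
  case True then show ?thesis using assms by simp
next
  case False
  then have tp: "0 < t'" using assms by simp
  define h where "h = hu a t'"
  have hC: "(\<lambda>\<omega>. h (R \<omega>)) \<in> Cls" unfolding h_def using huR_Cls assms by simp
  define \<pi> where "\<pi> \<omega> = (t / t') * h (R \<omega>)" for \<omega>
  have q01: "0 \<le> t / t'" "t / t' \<le> 1" using assms tp by auto
  have \<pi>C: "\<pi> \<in> Cls"
  proof -
    have "0 \<le> \<pi> \<omega> \<and> \<pi> \<omega> \<le> 1" for \<omega>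
    proof -
      from hC have "0 \<le> h (R \<omega>)" "h (R \<omega>) \<le> 1" by (auto simp: Cls_def)
      then show ?thesis unfolding \<pi>_def using q01 mult_le_one mult_nonneg_nonneg by blast
    qed
    moreover have "\<pi> \<in> borel_measurable F" using hC unfolding Cls_def \<pi>_def by auto
    ultimately show ?thesis by (auto simp: Cls_def)
  qed
  note i1 = clsint[OF hC, of a]
  have "(\<integral>\<omega>. \<pi> \<omega> * indicator (SA a) \<omega> \<partial>M) = (t / t') * (\<integral>\<omega>. h (R \<omega>) * indicator (SA a) \<omega> \<partial>M)"
    by (simp add: \<pi>_def mult.assoc)
  also have "\<dots> = t" using mass_hu[of t' a] assms tp by (simp add: h_def)
  finally have mass: "(\<integral>\<omega>. \<pi> \<omega> * indicator (SA a) \<omega> \<partial>M) = t" .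
  have "(t / t') * U a t' = (\<integral>\<omega>. \<pi> \<omega> * indicator (SA a) \<omega> * R \<omega> \<partial>M)"
    by (simp add: \<pi>_def U_def h_def mult.assoc)
  also have "\<dots> \<le> U a t" using U_max[OF \<pi>C mass] assms by simp
  finally have 1: "(t / t') * U a t' \<le> U a t" .
  have 2: "U a t' \<le> t'" "0 \<le> U a t'" using U_bounds[of t' a] assms by auto
  have "U a t' - U a t \<le> U a t' - (t / t') * U a t'" using 1 by simp
  also have "\<dots> = ((t' - t) / t') * U a t'" using tp by (simp add: field_simps)
  also have "\<dots> \<le> ((t' - t) / t') * t'" using 2 assms tp by (intro mult_left_mono) auto
  also have "\<dots> = t' - t" using tp by simp
  finally show ?thesis .
qed

lemma U_cont: "continuous_on {0..mA a} (U a)"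
proof (rule lipschitz_on_continuous_on[of 1], rule lipschitz_onI)
  fix x y assume "x \<in> {0..mA a}" "y \<in> {0..mA a}"
  then show "dist (U a x) (U a y) \<le> 1 * dist x y"
    using U_mono[of x y a] U_lip[of x y a] U_mono[of y x a] U_lip[of y x a]
    by (cases "x \<le> y") (auto simp: dist_real_def abs_if)
qed simp

end



context fairsetup begin

definition hl :: "bool \<Rightarrow> real \<Rightarrow> real \<Rightarrow> real" where "hl a t r = 1 - hu a (mA a - t) r"
definition L :: "bool \<Rightarrow> real \<Rightarrow> real" where
  "L a t = (\<integral>\<omega>. hl a t (R \<omega>) * indicator (SA a) \<omega> * R \<omega> \<partial>M)"
definition CA :: "bool \<Rightarrow> real" where "CA a = (\<integral>\<omega>. indicator (SA a) \<omega> * R \<omega> \<partial>M)"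

lemma hu_meas[measurable]: "0 \<le> t \<Longrightarrow> t \<le> mA a \<Longrightarrow> hu a t \<in> borel_measurable borel"
  using hu_NP unfolding NP_def by blast

lemma hu_01: "0 \<le> t \<Longrightarrow> t \<le> mA a \<Longrightarrow> 0 \<le> hu a t r \<and> hu a t r \<le> 1"
  using hu_NP unfolding NP_def by blast

lemma hlR_Cls: "0 \<le> t \<Longrightarrow> t \<le> mA a \<Longrightarrow> (\<lambda>\<omega>. hl a t (R \<omega>)) \<in> Cls"
proof -
  assume t: "0 \<le> t" "t \<le> mA a"
  then have [measurable]: "hu a (mA a - t) \<in> borel_measurable borel" by (intro hu_meas) auto
  have "(\<lambda>\<omega>. hl a t (R \<omega>)) \<in> borel_measurable F" unfolding hl_def by measurable
  moreover have "0 \<le> hl a t r \<and> hl a t r \<le> 1" for r using hu_01[of "mA a - t" a r] t by (auto simp: hl_def)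
  ultimately show ?thesis by (auto simp: Cls_def)
qed

lemma indR_int: "integrable M (\<lambda>\<omega>. indicator (SA a) \<omega> * R \<omega>)"
  using clsint(2)[of "\<lambda>_. 1" a] by (auto simp: Cls_def)

lemma L_eq: "0 \<le> t \<Longrightarrow> t \<le> mA a \<Longrightarrow> L a t = CA a - U a (mA a - t)"
proof -
  assume t: "0 \<le> t" "t \<le> mA a"
  note i = clsint(2)[OF huR_Cls[of "mA a - t" a], of a]
  have "L a t = (\<integral>\<omega>. indicator (SA a) \<omega> * R \<omega> - hu a (mA a - t) (R \<omega>) * indicator (SA a) \<omega> * R \<omega> \<partial>M)"
    unfolding L_def hl_def by (intro Bochner_Integration.integral_cong) (auto simp: algebra_simps)
  also have "\<dots> = CA a - U a (mA a - t)"
    using i t indR_int[of a] by (simp add: CA_def U_def)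
  finally show ?thesis .
qed

lemma mass_hl: "0 \<le> t \<Longrightarrow> t \<le> mA a \<Longrightarrow> (\<integral>\<omega>. hl a t (R \<omega>) * indicator (SA a) \<omega> \<partial>M) = t"
proof -
  assume t: "0 \<le> t" "t \<le> mA a"
  note i = clsint(1)[OF huR_Cls[of "mA a - t" a], of a]
  have "(\<integral>\<omega>. hl a t (R \<omega>) * indicator (SA a) \<omega> \<partial>M) = (\<integral>\<omega>. indicator (SA a) \<omega> - hu a (mA a - t) (R \<omega>) * indicator (SA a) \<omega> \<partial>M)"
    unfolding hl_def by (intro Bochner_Integration.integral_cong) (auto simp: algebra_simps)
  also have "\<dots> = t"
    using i t mass_hu[of "mA a - t" a] int_ind[OF SAM, of a] by (simp add: mA_def)
  finally show ?thesis .
qed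

lemma L_min:
  assumes "\<pi> \<in> Cls" "(\<integral>\<omega>. \<pi> \<omega> * indicator (SA a) \<omega> \<partial>M) = t" "0 \<le> t" "t \<le> mA a"
  shows "L a t \<le> (\<integral>\<omega>. \<pi> \<omega> * indicator (SA a) \<omega> * R \<omega> \<partial>M)"
proof -
  have c: "(\<lambda>\<omega>. 1 - \<pi> \<omega>) \<in> Cls" using assms(1) by (auto simp: Cls_def)
  note i1 = clsint[OF assms(1), of a]
  have "(\<integral>\<omega>. (1 - \<pi> \<omega>) * indicator (SA a) \<omega> \<partial>M) = (\<integral>\<omega>. indicator (SA a) \<omega> - \<pi> \<omega> * indicator (SA a) \<omega> \<partial>M)"
    by (intro Bochner_Integration.integral_cong) (auto simp: algebra_simps)
  also have "\<dots> = mA a - t"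
    using i1 assms int_ind[OF SAM, of a] by (simp add: mA_def)
  finally have m: "(\<integral>\<omega>. (1 - \<pi> \<omega>) * indicator (SA a) \<omega> \<partial>M) = mA a - t" .
  have "(\<integral>\<omega>. (1 - \<pi> \<omega>) * indicator (SA a) \<omega> * R \<omega> \<partial>M) \<le> U a (mA a - t)"
    using U_max[OF c m] assms by simp
  moreover have "(\<integral>\<omega>. (1 - \<pi> \<omega>) * indicator (SA a) \<omega> * R \<omega> \<partial>M) = CA a - (\<integral>\<omega>. \<pi> \<omega> * indicator (SA a) \<omega> * R \<omega> \<partial>M)"
  proof -
    have "(\<integral>\<omega>. (1 - \<pi> \<omega>) * indicator (SA a) \<omega> * R \<omega> \<partial>M) = (\<integral>\<omega>. indicator (SA a) \<omega> * R \<omega> - \<pi> \<omega> * indicator (SA a) \<omega> * R \<omega> \<partial>M)"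
      by (intro Bochner_Integration.integral_cong) (auto simp: algebra_simps)
    also have "\<dots> = CA a - (\<integral>\<omega>. \<pi> \<omega> * indicator (SA a) \<omega> * R \<omega> \<partial>M)"
      using i1 indR_int[of a] by (simp add: CA_def)
    finally show ?thesis .
  qed
  ultimately show ?thesis using L_eq[of t a] assms by simp
qed

lemma L_cont: "continuous_on {0..mA a} (L a)"
proof -
  have "continuous_on {0..mA a} (\<lambda>t. CA a - U a (mA a - t))"
  proof (intro continuous_on_diff continuous_on_const)
    show "continuous_on {0..mA a} (\<lambda>t. U a (mA a - t))"
      by (rule continuous_on_compose2[OF U_cont]) (auto intro!: continuous_intros)
  qed
  then show ?thesis by (rule continuous_on_cong[THEN iffD1, rotated -1]) (auto simp: L_eq)
qed

definition mix :: "bool \<Rightarrow> real \<Rightarrow> real \<Rightarrow> real \<Rightarrow> real" where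
  "mix a t l r = l * hu a t r + (1 - l) * hl a t r"

definition W :: "bool \<Rightarrow> real \<Rightarrow> real \<Rightarrow> real" where
  "W a t l = l * U a t + (1 - l) * L a t"

lemma mix_Cls: "0 \<le> t \<Longrightarrow> t \<le> mA a \<Longrightarrow> 0 \<le> l \<Longrightarrow> l \<le> 1 \<Longrightarrow> (\<lambda>\<omega>. mix a t l (R \<omega>)) \<in> Cls"
  using huR_Cls[of t a] hlR_Cls[of t a] unfolding Cls_def mix_def
  by (auto intro!: convex_bound_le add_nonneg_nonneg mult_nonneg_nonneg)

lemma mix_mass: "0 \<le> t \<Longrightarrow> t \<le> mA a \<Longrightarrow> (\<integral>\<omega>. mix a t l (R \<omega>) * indicator (SA a) \<omega> \<partial>M) = t"
proof -
  assume t: "0 \<le> t" "t \<le> mA a"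
  note i1 = clsint(1)[OF huR_Cls[OF t], of a] and i2 = clsint(1)[OF hlR_Cls[OF t], of a]
  have "(\<integral>\<omega>. mix a t l (R \<omega>) * indicator (SA a) \<omega> \<partial>M) =
     (\<integral>\<omega>. l * (hu a t (R \<omega>) * indicator (SA a) \<omega>) + (1 - l) * (hl a t (R \<omega>) * indicator (SA a) \<omega>) \<partial>M)"
    unfolding mix_def by (intro Bochner_Integration.integral_cong) (auto simp: algebra_simps)
  also have "\<dots> = l * t + (1 - l) * t"
    using i1 i2 mass_hu[OF t] mass_hl[OF t] by simp
  finally show ?thesis by (simp add: algebra_simps)
qed

lemma mix_J: "0 \<le> t \<Longrightarrow> t \<le> mA a \<Longrightarrow> (\<integral>\<omega>. mix a t l (R \<omega>) * indicator (SA a) \<omega> * R \<omega> \<partial>M) = W a t l"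
proof -
  assume t: "0 \<le> t" "t \<le> mA a"
  note i1 = clsint(2)[OF huR_Cls[OF t], of a] and i2 = clsint(2)[OF hlR_Cls[OF t], of a]
  have "(\<integral>\<omega>. mix a t l (R \<omega>) * indicator (SA a) \<omega> * R \<omega> \<partial>M) =
     (\<integral>\<omega>. l * (hu a t (R \<omega>) * indicator (SA a) \<omega> * R \<omega>) + (1 - l) * (hl a t (R \<omega>) * indicator (SA a) \<omega> * R \<omega>) \<partial>M)"
    unfolding mix_def by (intro Bochner_Integration.integral_cong) (auto simp: algebra_simps)
  also have "\<dots> = W a t l"
    using i1 i2 by (simp add: W_def U_def L_def)
  finally show ?thesis .
qed

lemma W_cont: "continuous_on ({0..mA a} \<times> {0..1}) (\<lambda>(t, l). W a t l)"
proof -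
  have cU: "continuous_on ({0..mA a} \<times> {0..1::real}) (\<lambda>x. U a (fst x))"
    by (rule continuous_on_compose2[OF U_cont]) (auto intro!: continuous_intros)
  have cL: "continuous_on ({0..mA a} \<times> {0..1::real}) (\<lambda>x. L a (fst x))"
    by (rule continuous_on_compose2[OF L_cont]) (auto intro!: continuous_intros)
  have "continuous_on ({0..mA a} \<times> {0..1}) (\<lambda>x. snd x * U a (fst x) + (1 - snd x) * L a (fst x))"
    by (intro continuous_intros cU cL)
  then show ?thesis by (simp add: W_def case_prod_beta)
qed

end



context fairsetup begin

definition TT :: "bool \<Rightarrow> ('a \<Rightarrow> real) \<Rightarrow> real" where "TT a \<pi> = (\<integral>\<omega>. \<pi> \<omega> * indicator (SA a) \<omega> \<partial>M)"
definition JJ :: "bool \<Rightarrow> ('a \<Rightarrow> real) \<Rightarrow> real" where "JJ a \<pi> = (\<integral>\<omega>. \<pi> \<omega> * indicator (SA a) \<omega> * R \<omega> \<partial>M)"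
definition V :: "('a \<Rightarrow> real) \<Rightarrow> real \<times> real \<times> real \<times> real" where
  "V \<pi> = (JJ False \<pi>, TT False \<pi>, JJ True \<pi>, TT True \<pi>)"
definition Wf :: "real \<times> real \<times> real \<times> real \<Rightarrow> real \<times> real \<times> real \<times> real" where
  "Wf z = (W False (fst z) (fst (snd z)), fst z, W True (fst (snd (snd z))) (snd (snd (snd z))), fst (snd (snd z)))"
definition Box :: "(real \<times> real \<times> real \<times> real) set" where
  "Box = {0..mA False} \<times> {0..1} \<times> {0..mA True} \<times> {0..1}"
definition qz :: "real \<times> real \<times> real \<times> real \<Rightarrow> real \<Rightarrow> bool \<Rightarrow> real" where
  "qz z r a = (if a then mix True (fst (snd (snd z))) (snd (snd (snd z))) r else mix False (fst z) (fst (snd z)) r)"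

lemma mix_01: "0 \<le> t \<Longrightarrow> t \<le> mA a \<Longrightarrow> 0 \<le> l \<Longrightarrow> l \<le> 1 \<Longrightarrow> 0 \<le> mix a t l r \<and> mix a t l r \<le> 1"
  using hu_01[of t a r] hu_01[of "mA a - t" a r] unfolding mix_def hl_def
  by (auto intro!: convex_bound_le add_nonneg_nonneg mult_nonneg_nonneg)

lemma mix_meas[measurable]: "0 \<le> t \<Longrightarrow> t \<le> mA a \<Longrightarrow> mix a t l \<in> borel_measurable borel"
proof -
  assume t: "0 \<le> t" "t \<le> mA a"
  then have [measurable]: "hu a t \<in> borel_measurable borel" "hu a (mA a - t) \<in> borel_measurable borel"
    by (auto intro: hu_meas)
  show ?thesis unfolding mix_def hl_def by measurable
qed

lemma qz_rp: "z \<in> Box \<Longrightarrow> randomized_predictor borel (qz z)"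
proof -
  assume z: "z \<in> Box"
  then have [measurable]: "mix True (fst (snd (snd z))) (snd (snd (snd z))) \<in> borel_measurable borel"
     "mix False (fst z) (fst (snd z)) \<in> borel_measurable borel"
    by (auto simp: Box_def intro!: mix_meas)
  have "(\<lambda>(r, a). qz z r a) \<in> borel_measurable (borel \<Otimes>\<^sub>M count_space UNIV)"
    unfolding qz_def case_prod_beta by measurable
  moreover have "0 \<le> qz z r a \<and> qz z r a \<le> 1" for r a
    using z mix_01 by (auto simp: Box_def qz_def)
  ultimately show ?thesis by (simp add: randomized_predictor_def)
qed

lemma qz_Cls: "z \<in> Box \<Longrightarrow> (\<lambda>\<omega>. qz z (R \<omega>) (A \<omega>)) \<in> Cls"
proof -
  assume z: "z \<in> Box"
  then have [measurable]: "mix True (fst (snd (snd z))) (snd (snd (snd z))) \<in> borel_measurable borel"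
     "mix False (fst z) (fst (snd z)) \<in> borel_measurable borel"
    by (auto simp: Box_def intro!: mix_meas)
  have "(\<lambda>\<omega>. qz z (R \<omega>) (A \<omega>)) \<in> borel_measurable F"
    unfolding qz_def by measurable
  moreover have "0 \<le> qz z r a \<and> qz z r a \<le> 1" for r a
    using z mix_01 by (auto simp: Box_def qz_def)
  ultimately show ?thesis by (simp add: Cls_def)
qed

lemma SA_ind: "\<omega> \<in> SA a \<Longrightarrow> A \<omega> = a" by (simp add: SA_def)

lemma V_qz: "z \<in> Box \<Longrightarrow> V (\<lambda>\<omega>. qz z (R \<omega>) (A \<omega>)) = Wf z"
proof -
  assume z: "z \<in> Box"
  have eq1: "(\<lambda>\<omega>. qz z (R \<omega>) (A \<omega>) * indicator (SA a) \<omega>) = (\<lambda>\<omega>. qz z (R \<omega>) a * indicator (SA a) \<omega>)" for a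
  proof (rule ext)
    fix \<omega> show "qz z (R \<omega>) (A \<omega>) * indicator (SA a) \<omega> = qz z (R \<omega>) a * indicator (SA a) \<omega>"
      by (cases "\<omega> \<in> SA a") (auto simp: indicator_def SA_def)
  qed
  have eq2: "(\<lambda>\<omega>. qz z (R \<omega>) (A \<omega>) * indicator (SA a) \<omega> * R \<omega>) = (\<lambda>\<omega>. qz z (R \<omega>) a * indicator (SA a) \<omega> * R \<omega>)" for a
  proof (rule ext)
    fix \<omega> show "qz z (R \<omega>) (A \<omega>) * indicator (SA a) \<omega> * R \<omega> = qz z (R \<omega>) a * indicator (SA a) \<omega> * R \<omega>"
      by (cases "\<omega> \<in> SA a") (auto simp: indicator_def SA_def)
  qed
  show ?thesis
    using z unfolding V_def Wf_def TT_def JJ_def eq1 eq2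
    by (auto simp: qz_def Box_def mix_mass mix_J)
qed

lemma exists_conv: "(L0::real) \<le> J \<Longrightarrow> J \<le> U0 \<Longrightarrow> \<exists>l. 0 \<le> l \<and> l \<le> 1 \<and> J = l * U0 + (1 - l) * L0"
proof (cases "U0 = L0")
  case True
  then show "L0 \<le> J \<Longrightarrow> J \<le> U0 \<Longrightarrow> ?thesis" by (intro exI[of _ 0]) auto
next
  case False
  assume "L0 \<le> J" "J \<le> U0"
  with False have "L0 < U0" by simp
  define l where "l = (J - L0) / (U0 - L0)"
  have "l * U0 + (1 - l) * L0 = L0 + l * (U0 - L0)" by (simp add: algebra_simps)
  also have "\<dots> = J" using \<open>L0 < U0\<close> by (simp add: l_def)
  finally have "J = l * U0 + (1 - l) * L0" by simp
  moreover have "0 \<le> l" "l \<le> 1" using \<open>L0 < U0\<close> \<open>L0 \<le> J\<close> \<open>J \<le> U0\<close> by (auto simp: l_def divide_simps)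
  ultimately show ?thesis by blast
qed

lemma TT_range: "\<pi> \<in> Cls \<Longrightarrow> 0 \<le> TT a \<pi> \<and> TT a \<pi> \<le> mA a"
proof -
  assume c: "\<pi> \<in> Cls"
  have [measurable]: "\<pi> \<in> borel_measurable M" using Cls_M[OF c] .
  have p: "0 \<le> \<pi> \<omega> \<and> \<pi> \<omega> \<le> 1" for \<omega> using c by (auto simp: Cls_def)
  have "0 \<le> TT a \<pi>" unfolding TT_def using p by (intro integral_nonneg_AE AE_I2) auto
  moreover have "TT a \<pi> \<le> (\<integral>\<omega>. indicator (SA a) \<omega> \<partial>M)"
    unfolding TT_def using p by (intro integral_mono intb1) (auto simp: indicator_def)
  ultimately show ?thesis by (simp add: mA_def)
qed

lemma V_realize: "\<pi> \<in> Cls \<Longrightarrow> \<exists>z\<in>Box. Wf z = V \<pi>"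
proof -
  assume c: "\<pi> \<in> Cls"
  have "\<exists>l. 0 \<le> l \<and> l \<le> 1 \<and> JJ a \<pi> = W a (TT a \<pi>) l" for a
    using exists_conv[OF L_min[OF c _ ] U_max[OF c]] TT_range[OF c, of a] unfolding W_def JJ_def TT_def
    by auto
  then obtain l0 l1 where l0: "0 \<le> l0" "l0 \<le> 1" "JJ False \<pi> = W False (TT False \<pi>) l0"
    and l1: "0 \<le> l1" "l1 \<le> 1" "JJ True \<pi> = W True (TT True \<pi>) l1" by metis
  show ?thesis
    using l0 l1 TT_range[OF c, of False] TT_range[OF c, of True]
    by (intro bexI[of _ "(TT False \<pi>, l0, TT True \<pi>, l1)"]) (auto simp: Wf_def V_def Box_def)
qed

lemma Wf_cont: "continuous_on Box Wf"
proof -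
  have p0: "continuous_on Box (\<lambda>z. (fst z, fst (snd z)))" by (intro continuous_intros)
  have i0: "(\<lambda>z. (fst z, fst (snd z))) ` Box \<subseteq> {0..mA False} \<times> {0..1}" by (auto simp: Box_def)
  have c0: "continuous_on Box (\<lambda>z. W False (fst z) (fst (snd z)))"
    using continuous_on_compose2[OF W_cont[of False] p0 i0] by simp
  have p1: "continuous_on Box (\<lambda>z. (fst (snd (snd z)), snd (snd (snd z))))" by (intro continuous_intros)
  have i1: "(\<lambda>z. (fst (snd (snd z)), snd (snd (snd z)))) ` Box \<subseteq> {0..mA True} \<times> {0..1}" by (auto simp: Box_def)
  have c1: "continuous_on Box (\<lambda>z. W True (fst (snd (snd z))) (snd (snd (snd z))))"
    using continuous_on_compose2[OF W_cont[of True] p1 i1] by (simp add: case_prod_beta)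
  show ?thesis unfolding Wf_def by (intro continuous_intros c0 c1)
qed

lemma Box_compact: "compact Box"
  unfolding Box_def by (intro compact_Times compact_Icc)

end



context fairsetup begin

lemma pj:
  assumes c: "\<pi> \<in> Cls"
  shows "pred_joint M \<pi> (\<lambda>\<omega>. A \<omega> = a \<and> Y \<omega> = y) = (if y then JJ a \<pi> else TT a \<pi> - JJ a \<pi>)"
proof -
  note i = clsint[OF c, of a]
  have [measurable]: "\<pi> \<in> borel_measurable M" using Cls_M[OF c] .
  have i3: "integrable M (\<lambda>\<omega>. \<pi> \<omega> * indicator (SA a) \<omega> * indY \<omega>)"
    using c by (intro intb1) (auto simp: Cls_def indicator_def indY_def)
  have "pred_joint M \<pi> (\<lambda>\<omega>. A \<omega> = a \<and> Y \<omega> = y) =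
     (\<integral>\<omega>. (if y then \<pi> \<omega> * indicator (SA a) \<omega> * indY \<omega> else \<pi> \<omega> * indicator (SA a) \<omega> - \<pi> \<omega> * indicator (SA a) \<omega> * indY \<omega>) \<partial>M)"
    unfolding pred_joint_def
    by (intro Bochner_Integration.integral_cong) (auto simp: indicator_def SA_def indY_def)
  also have "\<dots> = (if y then JJ a \<pi> else TT a \<pi> - JJ a \<pi>)"
    using i i3 towerS[OF c, of a] by (cases y) (simp_all add: JJ_def TT_def)
  finally show ?thesis .
qed

definition Phi :: "(bool \<Rightarrow> bool \<Rightarrow> real) \<Rightarrow> real \<times> real \<times> real \<times> real \<Rightarrow> real" where
  "Phi l v = (\<integral>\<omega>. l False (Y \<omega>) \<partial>M)
     + (l True False - l False False) * (fst (snd v) + snd (snd (snd v)))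
     + ((l True True - l False True) - (l True False - l False False)) * (fst v + fst (snd (snd v)))"

lemma loss_Phi:
  assumes c: "\<pi> \<in> Cls"
  shows "expected_loss M \<pi> l Y = Phi l (V \<pi>)"
proof -
  have [measurable]: "\<pi> \<in> borel_measurable M" using Cls_M[OF c] .
  define dF where "dF = l True False - l False False"
  define dd where "dd = (l True True - l False True) - (l True False - l False False)"
  have iY: "integrable M (\<lambda>\<omega>. l False (Y \<omega>))"
  proof -
    have "(\<lambda>\<omega>. l False (Y \<omega>)) = (\<lambda>\<omega>. l False True * indY \<omega> + l False False * (1 - indY \<omega>))"
      by (auto simp: indY_def fun_eq_iff)
    moreover have "integrable M indY" by (intro intb1) (auto simp: indY_def)
    ultimately show ?thesis by simp
  qed
  have j: "integrable M (\<lambda>\<omega>. \<pi> \<omega> * indicator (SA a) \<omega> * indY \<omega>)" for a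
    using c by (intro intb1) (auto simp: Cls_def indicator_def indY_def)
  note i0 = clsint[OF c, of False] and i1 = clsint[OF c, of True]
  have "expected_loss M \<pi> l Y = (\<integral>\<omega>. l False (Y \<omega>)
     + dF * (\<pi> \<omega> * indicator (SA False) \<omega>) + dF * (\<pi> \<omega> * indicator (SA True) \<omega>)
     + dd * (\<pi> \<omega> * indicator (SA False) \<omega> * indY \<omega>) + dd * (\<pi> \<omega> * indicator (SA True) \<omega> * indY \<omega>) \<partial>M)"
    unfolding expected_loss_def
  proof (intro Bochner_Integration.integral_cong refl)
    fix \<omega> assume "\<omega> \<in> space M"
    then show "\<pi> \<omega> * l True (Y \<omega>) + (1 - \<pi> \<omega>) * l False (Y \<omega>) = l False (Y \<omega>)
     + dF * (\<pi> \<omega> * indicator (SA False) \<omega>) + dF * (\<pi> \<omega> * indicator (SA True) \<omega>)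
     + dd * (\<pi> \<omega> * indicator (SA False) \<omega> * indY \<omega>) + dd * (\<pi> \<omega> * indicator (SA True) \<omega> * indY \<omega>)"
      by (cases "A \<omega>"; cases "Y \<omega>") (auto simp: indicator_def SA_def indY_def dF_def dd_def algebra_simps)
  qed
  also have "\<dots> = (\<integral>\<omega>. l False (Y \<omega>) \<partial>M) + dF * TT False \<pi> + dF * TT True \<pi>
     + dd * JJ False \<pi> + dd * JJ True \<pi>"
    using iY i0 i1 j[of False] j[of True] towerS[OF c, of False] towerS[OF c, of True]
    by (simp add: TT_def JJ_def)
  also have "\<dots> = Phi l (V \<pi>)"
    by (simp add: Phi_def V_def dF_def dd_def algebra_simps)
  finally show ?thesis .
qed

lemma Phi_cont: "continuous_on UNIV (Phi l)"
  unfolding Phi_def by (intro continuous_intros)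

lemma main_gen:
  fixes P :: "('a \<Rightarrow> real) \<Rightarrow> bool" and Psi :: "real \<times> real \<times> real \<times> real \<Rightarrow> bool"
  assumes cl: "closed {v. Psi v}"
    and PPsi: "\<And>\<pi>. \<pi> \<in> Cls \<Longrightarrow> P \<pi> \<longleftrightarrow> Psi (V \<pi>)"
    and ne: "\<exists>\<pi>\<in>Cls. P \<pi>"
  shows "\<exists>q. randomized_predictor borel q \<and> P (\<lambda>\<omega>. q (R \<omega>) (A \<omega>))
     \<and> (\<forall>p. randomized_predictor MX p \<and> P (\<lambda>\<omega>. p (X \<omega>) (A \<omega>))
        \<longrightarrow> expected_loss M (\<lambda>\<omega>. q (R \<omega>) (A \<omega>)) l Y \<le> expected_loss M (\<lambda>\<omega>. p (X \<omega>) (A \<omega>)) l Y)"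
proof -
  define K where "K = Box \<inter> Wf -` {v. Psi v}"
  have "closed K" unfolding K_def
    by (rule continuous_closed_preimage[OF Wf_cont compact_imp_closed[OF Box_compact] cl])
  then have cK: "compact K" unfolding K_def
    using compact_Int_closed[OF Box_compact, of "Box \<inter> Wf -` {v. Psi v}"] by (simp add: Int_absorb1 K_def)
  have "K \<noteq> {}"
  proof -
    from ne obtain \<pi> where "\<pi> \<in> Cls" "P \<pi>" by blast
    then obtain z where "z \<in> Box" "Wf z = V \<pi>" using V_realize by blast
    then show ?thesis using PPsi[OF \<open>\<pi> \<in> Cls\<close>] \<open>P \<pi>\<close> by (auto simp: K_def)
  qed
  moreover have "continuous_on K (\<lambda>z. Phi l (Wf z))"
  proof -
    have "continuous_on Box (\<lambda>z. Phi l (Wf z))"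
      by (rule continuous_on_compose2[OF Phi_cont Wf_cont]) auto
    then show ?thesis by (rule continuous_on_subset) (auto simp: K_def)
  qed
  ultimately obtain zs where zs: "zs \<in> K" "\<And>z. z \<in> K \<Longrightarrow> Phi l (Wf zs) \<le> Phi l (Wf z)"
    using continuous_attains_inf[OF cK] by blast
  have zB: "zs \<in> Box" using zs by (auto simp: K_def)
  show ?thesis
  proof (intro exI[of _ "qz zs"] conjI allI impI)
    show "randomized_predictor borel (qz zs)" using qz_rp[OF zB] .
    show "P (\<lambda>\<omega>. qz zs (R \<omega>) (A \<omega>))"
      using PPsi[OF qz_Cls[OF zB]] V_qz[OF zB] zs(1) by (auto simp: K_def)
    fix p assume p: "randomized_predictor MX p \<and> P (\<lambda>\<omega>. p (X \<omega>) (A \<omega>))"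
    have pC: "(\<lambda>\<omega>. p (X \<omega>) (A \<omega>)) \<in> Cls"
    proof -
      have pm: "(\<lambda>(x, a). p x a) \<in> borel_measurable (MX \<Otimes>\<^sub>M count_space UNIV)" and
        pb: "\<forall>x a. 0 \<le> p x a \<and> p x a \<le> 1"
        using p by (auto simp: randomized_predictor_def)
      have "(\<lambda>\<omega>. (\<lambda>(x, a). p x a) (X \<omega>, A \<omega>)) \<in> borel_measurable F"
        using measurable_compose[OF XAF pm] by simp
      then show ?thesis using pb by (simp add: Cls_def)
    qed
    then obtain z where z: "z \<in> Box" "Wf z = V (\<lambda>\<omega>. p (X \<omega>) (A \<omega>))" using V_realize by blast
    then have zK: "z \<in> K" using PPsi[OF pC] p by (auto simp: K_def)
    have "expected_loss M (\<lambda>\<omega>. qz zs (R \<omega>) (A \<omega>)) l Y = Phi l (Wf zs)"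
      using loss_Phi[OF qz_Cls[OF zB]] V_qz[OF zB] by simp
    also have "\<dots> \<le> Phi l (Wf z)" using zs(2)[OF zK] .
    also have "\<dots> = expected_loss M (\<lambda>\<omega>. p (X \<omega>) (A \<omega>)) l Y"
      using loss_Phi[OF pC] z by simp
    finally show "expected_loss M (\<lambda>\<omega>. qz zs (R \<omega>) (A \<omega>)) l Y \<le> expected_loss M (\<lambda>\<omega>. p (X \<omega>) (A \<omega>)) l Y" .
  qed
qed

end

context fairsetup begin

definition pm :: "bool \<Rightarrow> bool \<Rightarrow> real" where
  "pm a y = measure M {\<omega>\<in>space M. A \<omega> = a \<and> Y \<omega> = y}"
lemma zero_Cls: "(\<lambda>_. 0::real) \<in> Cls" by (simp add: Cls_def)
lemma cl_EO: "closed {v. fst v * pm True True = fst (snd (snd v)) * pm False True \<and>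
     (fst (snd v) - fst v) * pm True False = (snd (snd (snd v)) - fst (snd (snd v))) * pm False False}"
    by (intro closed_Collect_conj closed_Collect_eq continuous_intros)
lemma ne_EO: "\<exists>\<pi>\<in>Cls. equalized_odds M \<pi> A Y"
    by (intro bexI[OF _ zero_Cls]) (simp add: equalized_odds_def pred_joint_def)
lemma iff_EO: assumes c: "\<pi> \<in> Cls" shows "equalized_odds M \<pi> A Y \<longleftrightarrow> (fst (V \<pi>) * pm True True = fst (snd (snd (V \<pi>))) * pm False True \<and>
     (fst (snd (V \<pi>)) - fst (V \<pi>)) * pm True False = (snd (snd (snd (V \<pi>))) - fst (snd (snd (V \<pi>)))) * pm False False)"
    unfolding equalized_odds_def all_bool_eq pj[OF c] by (simp add: V_def pm_def)
lemma final_EO: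
  "\<exists>q. randomized_predictor borel q \<and> equalized_odds M (\<lambda>\<omega>. q (R \<omega>) (A \<omega>)) A Y
     \<and> (\<forall>p. randomized_predictor MX p \<and> equalized_odds M (\<lambda>\<omega>. p (X \<omega>) (A \<omega>)) A Y
        \<longrightarrow> expected_loss M (\<lambda>\<omega>. q (R \<omega>) (A \<omega>)) l Y \<le> expected_loss M (\<lambda>\<omega>. p (X \<omega>) (A \<omega>)) l Y)"
  using main_gen[where P = "\<lambda>\<pi>. equalized_odds M \<pi> A Y" and l = l, OF cl_EO iff_EO ne_EO] by simp

lemma cl_EOpp: "closed {v. fst v * pm True True = fst (snd (snd v)) * pm False True}"
    by (intro closed_Collect_eq continuous_intros)
lemma ne_EOpp: "\<exists>\<pi>\<in>Cls. equal_opportunity M \<pi> A Y"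
    by (intro bexI[OF _ zero_Cls]) (simp add: equal_opportunity_def pred_joint_def)
lemma iff_EOpp: assumes c: "\<pi> \<in> Cls" shows "equal_opportunity M \<pi> A Y \<longleftrightarrow> fst (V \<pi>) * pm True True = fst (snd (snd (V \<pi>))) * pm False True"
    unfolding equal_opportunity_def pj[OF c] by (simp add: V_def pm_def)
lemma final_EOpp:
  "\<exists>q. randomized_predictor borel q \<and> equal_opportunity M (\<lambda>\<omega>. q (R \<omega>) (A \<omega>)) A Y
     \<and> (\<forall>p. randomized_predictor MX p \<and> equal_opportunity M (\<lambda>\<omega>. p (X \<omega>) (A \<omega>)) A Y
        \<longrightarrow> expected_loss M (\<lambda>\<omega>. q (R \<omega>) (A \<omega>)) l Y \<le> expected_loss M (\<lambda>\<omega>. p (X \<omega>) (A \<omega>)) l Y)"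
  using main_gen[where P = "\<lambda>\<pi>. equal_opportunity M \<pi> A Y" and l = l, OF cl_EOpp iff_EOpp ne_EOpp] by simp

end

theorem corollary5p3:
  fixes M :: "'a measure" and MX :: "'x measure"
    and X :: "'a \<Rightarrow> 'x" and Y A :: "'a \<Rightarrow> bool"
    and R :: "'a \<Rightarrow> real" and l :: "bool \<Rightarrow> bool \<Rightarrow> real"
  assumes "prob_space M"
    and "X \<in> measurable M MX"
    and "Y \<in> measurable M (count_space UNIV)"
    and "A \<in> measurable M (count_space UNIV)"
    and "R = real_cond_exp M
               (vimage_algebra (space M) (\<lambda>\<omega>. (X \<omega>, A \<omega>)) (MX \<Otimes>\<^sub>M count_space UNIV))
               (\<lambda>\<omega>. if Y \<omega> then 1 else 0)"
  shows "(\<exists>q. randomized_predictor borel q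
              \<and> equalized_odds M (\<lambda>\<omega>. q (R \<omega>) (A \<omega>)) A Y
              \<and> (\<forall>p. randomized_predictor MX p \<and> equalized_odds M (\<lambda>\<omega>. p (X \<omega>) (A \<omega>)) A Y
                     \<longrightarrow> expected_loss M (\<lambda>\<omega>. q (R \<omega>) (A \<omega>)) l Y
                         \<le> expected_loss M (\<lambda>\<omega>. p (X \<omega>) (A \<omega>)) l Y))
       \<and> (\<exists>q. randomized_predictor borel q
              \<and> equal_opportunity M (\<lambda>\<omega>. q (R \<omega>) (A \<omega>)) A Y
              \<and> (\<forall>p. randomized_predictor MX p \<and> equal_opportunity M (\<lambda>\<omega>. p (X \<omega>) (A \<omega>)) A Y
                     \<longrightarrow> expected_loss M (\<lambda>\<omega>. q (R \<omega>) (A \<omega>)) l Y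
                         \<le> expected_loss M (\<lambda>\<omega>. p (X \<omega>) (A \<omega>)) l Y))"
proof -
  interpret fairsetup M MX X Y A R
    by (rule fairsetup.intro[OF assms(1) fairsetup_axioms.intro[OF assms(2-5)]])
  show ?thesis using final_EO[of l] final_EOpp[of l] by (rule conjI)
qed

end
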